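(* Let $N\ge 2$ and let $f:\mathbb{C}\to\mathbb{C}^N$ be the Veronese map $f(\zeta)=\left(\binom{N-1}{k}^{1/2}\zeta^k\right)_{k=0}^{N-1}$, so $|f|^2=(1+|\zeta|^2)^{N-1}$. Define $P_+^0 f=f$, $P_+^{k+1}f=P_+(P_+^k f)$, where $P_+ g=\partial g-g\,\frac{g^\dagger\cdot\partial g}{g^\dagger\cdot g}$, $\partial=\partial/\partial\zeta$, $\bar\partial=\partial/\partial\bar\zeta$, and let $P_k=\frac{P_+^k f\otimes (P_+^k f)^\dagger}{|P_+^k f|^2}$ for $k=0,\dots,N-1$. Let $\alpha_0,\dots,\alpha_{N-2}$ be real constants, not all zero, and $\mathbb{P}=\sum_{k=0}^{N-2}\alpha_kP_k$. Then the induced metric of the associated surface satisfies $g_{++}=\operatorname{tr}(\partial\mathbb{P}\partial\mathbb{P})=0$ and $$g_{+-}=\operatorname{tr}(\partial\mathbb{P}\,\bar\partial\mathbb{P})=\frac{\alpha}{(1+|\zeta|^2)^2}$$ for some positive constant $\alpha$ (depending on $N$ and the $\alpha_k$). Consequently the surface has constant curvature $$K:=-\frac{4}{g_{+-}}\,\partial\bar\partial\ln g_{+-}=\frac{8}{\alpha}.$$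
   Context: Here $\zeta$ is the complex coordinate on the plane obtained from $S^2$ by stereographic projection, $\dagger$ denotes Hermitian conjugation, $g^\dagger\cdot h=\sum_i\bar g^ih^i$, $|g|^2=g^\dagger\cdot g$. The vectors $P_+^kf$ define harmonic maps $S^2\to CP^{N-1}$ (the Veronese sequence). The Hermitian matrix $\mathbb{P}$ defines a surface in $\mathbb{R}^{N^2-1}$ (coordinates: real and imaginary parts of its entries), whose metric components are $g_{++}=\operatorname{tr}(\partial\mathbb{P}\partial\mathbb{P})$, $g_{+-}=\operatorname{tr}(\partial\mathbb{P}\bar\partial\mathbb{P})$, $g_{--}=\overline{g_{++}}$, and whose curvature (when $g_{++}=0$) is $K=-\frac{4}{g_{+-}}\partial\bar\partial\ln g_{+-}$. *)

theory Defs
  imports "HOL-Analysis.Analysis"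
begin

definition dpx :: "(complex \<Rightarrow> complex) \<Rightarrow> complex \<Rightarrow> complex" where
  "dpx F z = vector_derivative (\<lambda>t::real. F (z + of_real t)) (at 0)"

definition dpy :: "(complex \<Rightarrow> complex) \<Rightarrow> complex \<Rightarrow> complex" where
  "dpy F z = vector_derivative (\<lambda>t::real. F (z + \<i> * of_real t)) (at 0)"

definition dz :: "(complex \<Rightarrow> complex) \<Rightarrow> complex \<Rightarrow> complex" where
  "dz F z = (dpx F z - \<i> * dpy F z) / 2"

definition dzb :: "(complex \<Rightarrow> complex) \<Rightarrow> complex \<Rightarrow> complex" where
  "dzb F z = (dpx F z + \<i> * dpy F z) / 2"

text \<open>Vectors in C^N are functions nat => complex, with indices 0..N-1.\<close>
definition herm :: "nat \<Rightarrow> (nat \<Rightarrow> complex) \<Rightarrow> (nat \<Rightarrow> complex) \<Rightarrow> complex" where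
  "herm N g h = (\<Sum>i<N. cnj (g i) * h i)"

definition dzvec :: "(complex \<Rightarrow> nat \<Rightarrow> complex) \<Rightarrow> complex \<Rightarrow> nat \<Rightarrow> complex" where
  "dzvec g z = (\<lambda>i. dz (\<lambda>w. g w i) z)"

definition Pplus :: "nat \<Rightarrow> (complex \<Rightarrow> nat \<Rightarrow> complex) \<Rightarrow> complex \<Rightarrow> nat \<Rightarrow> complex" where
  "Pplus N g = (\<lambda>z i. dzvec g z i
      - g z i * herm N (g z) (dzvec g z) / herm N (g z) (g z))"

definition veronese :: "nat \<Rightarrow> complex \<Rightarrow> nat \<Rightarrow> complex" where
  "veronese N z = (\<lambda>k. of_real (sqrt (real ((N - 1) choose k))) * z ^ k)"

definition projector :: "nat \<Rightarrow> nat \<Rightarrow> complex \<Rightarrow> nat \<Rightarrow> nat \<Rightarrow> complex" where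
  "projector N k z = (let v = (Pplus N ^^ k) (veronese N) z in
      (\<lambda>i j. v i * cnj (v j) / herm N v v))"

definition Pmat :: "nat \<Rightarrow> (nat \<Rightarrow> real) \<Rightarrow> complex \<Rightarrow> nat \<Rightarrow> nat \<Rightarrow> complex" where
  "Pmat N \<alpha> z = (\<lambda>i j. \<Sum>k\<le>N - 2. of_real (\<alpha> k) * projector N k z i j)"

definition trprod :: "nat \<Rightarrow> (nat \<Rightarrow> nat \<Rightarrow> complex) \<Rightarrow> (nat \<Rightarrow> nat \<Rightarrow> complex) \<Rightarrow> complex" where
  "trprod N A B = (\<Sum>i<N. \<Sum>j<N. A i j * B j i)"

definition gpp :: "nat \<Rightarrow> (nat \<Rightarrow> real) \<Rightarrow> complex \<Rightarrow> complex" where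
  "gpp N \<alpha> z = trprod N (\<lambda>i j. dz (\<lambda>w. Pmat N \<alpha> w i j) z) (\<lambda>i j. dz (\<lambda>w. Pmat N \<alpha> w i j) z)"

definition gpm :: "nat \<Rightarrow> (nat \<Rightarrow> real) \<Rightarrow> complex \<Rightarrow> complex" where
  "gpm N \<alpha> z = trprod N (\<lambda>i j. dz (\<lambda>w. Pmat N \<alpha> w i j) z) (\<lambda>i j. dzb (\<lambda>w. Pmat N \<alpha> w i j) z)"

end

theory Submission
  imports Defs
begin


lemma wirt:
  assumes "(F has_derivative (\<lambda>h. A * h + B * cnj h)) (at z)"
  shows "dz F z = A" "dzb F z = B"
proof -
  have hx: "((\<lambda>t::real. F (z + of_real t)) has_vector_derivative (A + B)) (at 0)"
  proof -
    have 1: "((\<lambda>t::real. z + of_real t) has_derivative (\<lambda>t. of_real t)) (at 0)"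
      by (auto intro!: derivative_eq_intros)
    have "((\<lambda>t::real. F (z + of_real t)) has_derivative (\<lambda>t. A * of_real t + B * cnj (of_real t))) (at 0)"
      using has_derivative_compose[OF 1, of F "\<lambda>h. A * h + B * cnj h"] assms by simp
    then show ?thesis unfolding has_vector_derivative_def
      by (rule has_derivative_eq_rhs) (auto simp: algebra_simps scaleR_conv_of_real)
  qed
  have hy: "((\<lambda>t::real. F (z + \<i> * of_real t)) has_vector_derivative (\<i> * A - \<i> * B)) (at 0)"
  proof -
    have 1: "((\<lambda>t::real. z + \<i> * of_real t) has_derivative (\<lambda>t. \<i> * of_real t)) (at 0)"
      by (auto intro!: derivative_eq_intros)
    have "((\<lambda>t::real. F (z + \<i> * of_real t)) has_derivative (\<lambda>t. A * (\<i> * of_real t) + B * cnj (\<i> * of_real t))) (at 0)"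
      using has_derivative_compose[OF 1, of F "\<lambda>h. A * h + B * cnj h"] assms by simp
    then show ?thesis unfolding has_vector_derivative_def
      by (rule has_derivative_eq_rhs) (auto simp: algebra_simps scaleR_conv_of_real)
  qed
  have px: "dpx F z = A + B" unfolding dpx_def using hx by (rule vector_derivative_at)
  have py: "dpy F z = \<i> * A - \<i> * B" unfolding dpy_def using hy by (rule vector_derivative_at)
  show "dz F z = A" unfolding dz_def px py by (simp add: algebra_simps)
  show "dzb F z = B" unfolding dzb_def px py by (simp add: algebra_simps)
qed

definition wd :: "(complex \<Rightarrow> complex) \<Rightarrow> bool" where
  "wd F \<longleftrightarrow> (\<forall>z. (F has_derivative (\<lambda>h. dz F z * h + dzb F z * cnj h)) (at z))"

lemma wdI:
  assumes "\<And>z. (F has_derivative (\<lambda>h. A z * h + B z * cnj h)) (at z)"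
  shows "wd F" "dz F = A" "dzb F = B"
proof -
  show a: "dz F = A" using wirt(1)[OF assms] by auto
  show b: "dzb F = B" using wirt(2)[OF assms] by auto
  show "wd F" unfolding wd_def a b using assms by auto
qed

lemma wdD: "wd F \<Longrightarrow> (F has_derivative (\<lambda>h. dz F z * h + dzb F z * cnj h)) (at z)"
  unfolding wd_def by auto

lemma wd_const: "wd (\<lambda>z. c)" "dz (\<lambda>z. c) = (\<lambda>z. 0)" "dzb (\<lambda>z. c) = (\<lambda>z. 0)"
  by (rule wdI[where A="\<lambda>z. 0" and B="\<lambda>z. 0"], simp)+

lemma wd_id: "wd (\<lambda>z. z)" "dz (\<lambda>z. z) = (\<lambda>z. 1)" "dzb (\<lambda>z. z) = (\<lambda>z. 0)"
  by (rule wdI[where A="\<lambda>z. 1" and B="\<lambda>z. 0"], simp)+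

lemma wd_cnj0: "wd (\<lambda>z. cnj z)" "dz (\<lambda>z. cnj z) = (\<lambda>z. 0)" "dzb (\<lambda>z. cnj z) = (\<lambda>z. 1)"
  by (rule wdI[where A="\<lambda>z. 0" and B="\<lambda>z. 1"], simp add: bounded_linear.has_derivative[OF bounded_linear_cnj])+

lemma wd_add:
  assumes "wd F" "wd G"
  shows "wd (\<lambda>z. F z + G z)" "dz (\<lambda>z. F z + G z) = (\<lambda>z. dz F z + dz G z)"
    "dzb (\<lambda>z. F z + G z) = (\<lambda>z. dzb F z + dzb G z)"
proof -
  have "((\<lambda>z. F z + G z) has_derivative (\<lambda>h. (dz F z + dz G z) * h + (dzb F z + dzb G z) * cnj h)) (at z)" for z
    by (rule has_derivative_eq_rhs[OF has_derivative_add[OF wdD[OF assms(1)] wdD[OF assms(2)]]])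
      (auto simp: algebra_simps)
  then show "wd (\<lambda>z. F z + G z)" "dz (\<lambda>z. F z + G z) = (\<lambda>z. dz F z + dz G z)"
    "dzb (\<lambda>z. F z + G z) = (\<lambda>z. dzb F z + dzb G z)" by (rule wdI)+
qed

lemma wd_mult:
  assumes "wd F" "wd G"
  shows "wd (\<lambda>z. F z * G z)" "dz (\<lambda>z. F z * G z) = (\<lambda>z. F z * dz G z + dz F z * G z)"
    "dzb (\<lambda>z. F z * G z) = (\<lambda>z. F z * dzb G z + dzb F z * G z)"
proof -
  have "((\<lambda>z. F z * G z) has_derivative (\<lambda>h. (F z * dz G z + dz F z * G z) * h + (F z * dzb G z + dzb F z * G z) * cnj h)) (at z)" for z
    by (rule has_derivative_eq_rhs[OF has_derivative_mult[OF wdD[OF assms(1)] wdD[OF assms(2)]]])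
      (auto simp: algebra_simps)
  then show "wd (\<lambda>z. F z * G z)" "dz (\<lambda>z. F z * G z) = (\<lambda>z. F z * dz G z + dz F z * G z)"
    "dzb (\<lambda>z. F z * G z) = (\<lambda>z. F z * dzb G z + dzb F z * G z)" by (rule wdI)+
qed

lemma wd_inverse:
  assumes "wd F" "\<And>z. F z \<noteq> 0"
  shows "wd (\<lambda>z. inverse (F z))" "dz (\<lambda>z. inverse (F z)) = (\<lambda>z. - (dz F z * inverse (F z) ^ 2))"
    "dzb (\<lambda>z. inverse (F z)) = (\<lambda>z. - (dzb F z * inverse (F z) ^ 2))"
proof -
  have "((\<lambda>z. inverse (F z)) has_derivative (\<lambda>h. (- (dz F z * inverse (F z) ^ 2)) * h + (- (dzb F z * inverse (F z) ^ 2)) * cnj h)) (at z)" for z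
    by (rule has_derivative_eq_rhs[OF Deriv.has_derivative_inverse[OF assms(2) wdD[OF assms(1)]]])
      (auto simp: algebra_simps power2_eq_square)
  then show "wd (\<lambda>z. inverse (F z))" "dz (\<lambda>z. inverse (F z)) = (\<lambda>z. - (dz F z * inverse (F z) ^ 2))"
    "dzb (\<lambda>z. inverse (F z)) = (\<lambda>z. - (dzb F z * inverse (F z) ^ 2))" by (rule wdI)+
qed

lemma wd_cnj:
  assumes "wd F"
  shows "wd (\<lambda>z. cnj (F z))" "dz (\<lambda>z. cnj (F z)) = (\<lambda>z. cnj (dzb F z))"
    "dzb (\<lambda>z. cnj (F z)) = (\<lambda>z. cnj (dz F z))"
proof -
  have "((\<lambda>z. cnj (F z)) has_derivative (\<lambda>h. cnj (dzb F z) * h + cnj (dz F z) * cnj h)) (at z)" for z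
    by (rule has_derivative_eq_rhs[OF bounded_linear.has_derivative[OF bounded_linear_cnj wdD[OF assms(1)]]])
      (auto simp: algebra_simps)
  then show "wd (\<lambda>z. cnj (F z))" "dz (\<lambda>z. cnj (F z)) = (\<lambda>z. cnj (dzb F z))"
    "dzb (\<lambda>z. cnj (F z)) = (\<lambda>z. cnj (dz F z))" by (rule wdI)+
qed

lemma wd_sum:
  assumes "finite A" "\<And>i. i \<in> A \<Longrightarrow> wd (F i)"
  shows "wd (\<lambda>z. \<Sum>i\<in>A. F i z)" "dz (\<lambda>z. \<Sum>i\<in>A. F i z) = (\<lambda>z. \<Sum>i\<in>A. dz (F i) z)"
    "dzb (\<lambda>z. \<Sum>i\<in>A. F i z) = (\<lambda>z. \<Sum>i\<in>A. dzb (F i) z)"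
proof -
  have "((\<lambda>z. \<Sum>i\<in>A. F i z) has_derivative (\<lambda>h. (\<Sum>i\<in>A. dz (F i) z) * h + (\<Sum>i\<in>A. dzb (F i) z) * cnj h)) (at z)" for z
    by (rule has_derivative_eq_rhs[OF has_derivative_sum[OF wdD[OF assms(2)]]])
      (auto simp: fun_eq_iff sum_distrib_left mult.commute sum.distrib)
  then show "wd (\<lambda>z. \<Sum>i\<in>A. F i z)" "dz (\<lambda>z. \<Sum>i\<in>A. F i z) = (\<lambda>z. \<Sum>i\<in>A. dz (F i) z)"
    "dzb (\<lambda>z. \<Sum>i\<in>A. F i z) = (\<lambda>z. \<Sum>i\<in>A. dzb (F i) z)" by (rule wdI)+
qed

lemma wd_minus:
  assumes "wd F"
  shows "wd (\<lambda>z. - F z)" "dz (\<lambda>z. - F z) = (\<lambda>z. - dz F z)"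
    "dzb (\<lambda>z. - F z) = (\<lambda>z. - dzb F z)"
proof -
  have "((\<lambda>z. - F z) has_derivative (\<lambda>h. (- dz F z) * h + (- dzb F z) * cnj h)) (at z)" for z
    by (rule has_derivative_eq_rhs[OF has_derivative_minus[OF wdD[OF assms(1)]]])
      (auto simp: algebra_simps)
  then show "wd (\<lambda>z. - F z)" "dz (\<lambda>z. - F z) = (\<lambda>z. - dz F z)"
    "dzb (\<lambda>z. - F z) = (\<lambda>z. - dzb F z)" by (rule wdI)+
qed

lemma wd_diff:
  assumes "wd F" "wd G"
  shows "wd (\<lambda>z. F z - G z)" "dz (\<lambda>z. F z - G z) = (\<lambda>z. dz F z - dz G z)"
    "dzb (\<lambda>z. F z - G z) = (\<lambda>z. dzb F z - dzb G z)"
proof -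
  have "((\<lambda>z. F z - G z) has_derivative (\<lambda>h. (dz F z - dz G z) * h + (dzb F z - dzb G z) * cnj h)) (at z)" for z
    by (rule has_derivative_eq_rhs[OF has_derivative_diff[OF wdD[OF assms(1)] wdD[OF assms(2)]]])
      (auto simp: algebra_simps)
  then show "wd (\<lambda>z. F z - G z)" "dz (\<lambda>z. F z - G z) = (\<lambda>z. dz F z - dz G z)"
    "dzb (\<lambda>z. F z - G z) = (\<lambda>z. dzb F z - dzb G z)" by (rule wdI)+
qed

lemma wd_power:
  assumes "wd F"
  shows "wd (\<lambda>z. F z ^ n)" "dz (\<lambda>z. F z ^ n) = (\<lambda>z. of_nat n * F z ^ (n - 1) * dz F z)"
    "dzb (\<lambda>z. F z ^ n) = (\<lambda>z. of_nat n * F z ^ (n - 1) * dzb F z)"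
proof -
  have "((\<lambda>z. F z ^ n) has_derivative (\<lambda>h. (of_nat n * F z ^ (n - 1) * dz F z) * h + (of_nat n * F z ^ (n - 1) * dzb F z) * cnj h)) (at z)" for z
    by (rule has_derivative_eq_rhs[OF has_derivative_power[OF wdD[OF assms(1)]]])
      (auto simp: algebra_simps)
  then show "wd (\<lambda>z. F z ^ n)" "dz (\<lambda>z. F z ^ n) = (\<lambda>z. of_nat n * F z ^ (n - 1) * dz F z)"
    "dzb (\<lambda>z. F z ^ n) = (\<lambda>z. of_nat n * F z ^ (n - 1) * dzb F z)" by (rule wdI)+
qed

lemmas wd_rules = wd_const wd_id wd_cnj0 wd_add wd_mult wd_inverse wd_cnj wd_minus wd_diff wd_power

inductive rat :: "(complex \<Rightarrow> complex) \<Rightarrow> bool" where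
  rat_const: "rat (\<lambda>z. c)"
| rat_id: "rat (\<lambda>z. z)"
| rat_cnj0: "rat (\<lambda>z. cnj z)"
| rat_add: "rat F \<Longrightarrow> rat G \<Longrightarrow> rat (\<lambda>z. F z + G z)"
| rat_mult: "rat F \<Longrightarrow> rat G \<Longrightarrow> rat (\<lambda>z. F z * G z)"
| rat_inv: "rat F \<Longrightarrow> (\<And>z. F z \<noteq> 0) \<Longrightarrow> rat (\<lambda>z. inverse (F z))"

lemma rat_wd: "rat F \<Longrightarrow> wd F"
  by (induction rule: rat.induct) (auto intro: wd_rules)

lemma rat_minus: "rat F \<Longrightarrow> rat (\<lambda>z. - F z)"
  using rat_mult[OF rat_const[of "-1"], of F] by simp

lemma rat_diff: "rat F \<Longrightarrow> rat G \<Longrightarrow> rat (\<lambda>z. F z - G z)"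
  using rat_add[of F "\<lambda>z. - G z"] rat_minus[of G] by simp

lemma rat_power: "rat F \<Longrightarrow> rat (\<lambda>z. F z ^ n)"
proof (induction n)
  case 0 then show ?case using rat_const[of 1] by simp
next
  case (Suc n) then show ?case using rat_mult[of F "\<lambda>z. F z ^ n"] by simp
qed

lemma rat_divide: "rat F \<Longrightarrow> rat G \<Longrightarrow> (\<And>z. G z \<noteq> 0) \<Longrightarrow> rat (\<lambda>z. F z / G z)"
  using rat_mult[of F "\<lambda>z. inverse (G z)"] rat_inv[of G] by (simp add: divide_inverse)

lemma rat_sum: "finite A \<Longrightarrow> (\<And>i. i \<in> A \<Longrightarrow> rat (F i)) \<Longrightarrow> rat (\<lambda>z. \<Sum>i\<in>A. F i z)"
proof (induction A rule: finite_induct)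
  case empty then show ?case using rat_const[of 0] by simp
next
  case (insert x A) then show ?case using rat_add[of "F x" "\<lambda>z. \<Sum>i\<in>A. F i z"] by simp
qed

lemma rat_cnj: "rat F \<Longrightarrow> rat (\<lambda>z. cnj (F z))"
proof (induction rule: rat.induct)
  case (rat_const c) then show ?case by (rule rat.rat_const)
next
  case rat_id then show ?case by (rule rat.rat_cnj0)
next
  case rat_cnj0 then show ?case using rat.rat_id by simp
next
  case (rat_add F G) then show ?case using rat.rat_add[of "\<lambda>z. cnj (F z)" "\<lambda>z. cnj (G z)"] by simp
next
  case (rat_mult F G) then show ?case using rat.rat_mult[of "\<lambda>z. cnj (F z)" "\<lambda>z. cnj (G z)"] by simp
next
  case (rat_inv F) then show ?case using rat.rat_inv[of "\<lambda>z. cnj (F z)"] by simp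
qed

lemma rat_deriv: "rat F \<Longrightarrow> rat (dz F) \<and> rat (dzb F)"
proof (induction rule: rat.induct)
  case (rat_const c) then show ?case by (simp add: wd_const rat.rat_const)
next
  case rat_id then show ?case by (simp add: wd_id rat.rat_const)
next
  case rat_cnj0 then show ?case by (simp add: wd_cnj0 rat.rat_const)
next
  case (rat_add F G) then show ?case by (simp add: wd_add rat_wd rat.rat_add)
next
  case (rat_mult F G) then show ?case by (simp add: wd_mult rat_wd rat.rat_add rat.rat_mult)
next
  case (rat_inv F) then show ?case
    by (simp add: wd_inverse rat_wd rat.rat_mult rat.rat_inv rat_minus rat_power)
qed

lemma rat_dz: "rat F \<Longrightarrow> rat (dz F)" and rat_dzb: "rat F \<Longrightarrow> rat (dzb F)"
  using rat_deriv by auto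

lemma rat_commute: "rat F \<Longrightarrow> dz (dzb F) = dzb (dz F)"
proof (induction rule: rat.induct)
  case (rat_const c) then show ?case by (simp add: wd_const)
next
  case rat_id then show ?case by (simp add: wd_id wd_const)
next
  case rat_cnj0 then show ?case by (simp add: wd_cnj0 wd_const)
next
  case (rat_add F G) then show ?case by (simp add: wd_add rat_wd rat_dz rat_dzb)
next
  case (rat_mult F G) then show ?case
    by (simp add: wd_mult wd_add rat_wd rat_dz rat_dzb algebra_simps)
next
  case (rat_inv F)
  have w: "wd F" "wd (dz F)" "wd (dzb F)" "wd (dz (dzb F))" "wd (dzb (dz F))"
    using rat_inv by (auto intro!: rat_wd rat_dz rat_dzb)
  show ?case using rat_inv w
    by (simp add: wd_inverse wd_mult wd_power wd_minus algebra_simps)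
qed



lemma wd_divide:
  assumes "wd F" "wd G" "\<And>z. G z \<noteq> 0"
  shows "wd (\<lambda>z. F z / G z)" "dz (\<lambda>z. F z / G z) = (\<lambda>z. (dz F z * G z - F z * dz G z) / G z ^ 2)"
    "dzb (\<lambda>z. F z / G z) = (\<lambda>z. (dzb F z * G z - F z * dzb G z) / G z ^ 2)"
proof -
  have e: "(\<lambda>z. F z / G z) = (\<lambda>z. F z * inverse (G z))" by (simp add: divide_inverse)
  show "wd (\<lambda>z. F z / G z)" unfolding e using assms by (simp add: wd_mult wd_inverse)
  show "dz (\<lambda>z. F z / G z) = (\<lambda>z. (dz F z * G z - F z * dz G z) / G z ^ 2)"
    unfolding e using assms apply (simp add: wd_mult wd_inverse)
    by (simp add: fun_eq_iff field_simps power2_eq_square)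
  show "dzb (\<lambda>z. F z / G z) = (\<lambda>z. (dzb F z * G z - F z * dzb G z) / G z ^ 2)"
    unfolding e using assms apply (simp add: wd_mult wd_inverse)
    by (simp add: fun_eq_iff field_simps power2_eq_square)
qed

definition dzbvec :: "(complex \<Rightarrow> nat \<Rightarrow> complex) \<Rightarrow> complex \<Rightarrow> nat \<Rightarrow> complex" where
  "dzbvec g z = (\<lambda>i. dzb (\<lambda>w. g w i) z)"

definition ratv :: "nat \<Rightarrow> (complex \<Rightarrow> nat \<Rightarrow> complex) \<Rightarrow> bool" where
  "ratv N g \<longleftrightarrow> (\<forall>i<N. rat (\<lambda>z. g z i))"

lemma herm_cnj: "cnj (herm N u v) = herm N v u"
  unfolding herm_def by (simp add: mult.commute)

lemma herm_scale_left: "herm N (\<lambda>i. c * u i) v = cnj c * herm N u v"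
  unfolding herm_def by (simp add: sum_distrib_left mult.assoc)

lemma herm_scale_right: "herm N u (\<lambda>i. c * v i) = c * herm N u v"
  unfolding herm_def by (simp add: sum_distrib_left mult_ac)

lemma herm_add_right: "herm N u (\<lambda>i. v i + w i) = herm N u v + herm N u w"
  unfolding herm_def by (simp add: sum.distrib algebra_simps)

lemma herm_add_left: "herm N (\<lambda>i. v i + w i) u = herm N v u + herm N w u"
  unfolding herm_def by (simp add: sum.distrib algebra_simps)

lemma herm_diff_right: "herm N u (\<lambda>i. v i - w i) = herm N u v - herm N u w"
  unfolding herm_def by (simp add: sum_subtractf algebra_simps)

lemma herm_real: "herm N u u = of_real (Re (herm N u u))"
  using herm_cnj[of N u u] by (metis Reals_cnj_iff of_real_Re)

lemma rat_herm: "ratv N u \<Longrightarrow> ratv N v \<Longrightarrow> rat (\<lambda>z. herm N (u z) (v z))"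
  unfolding herm_def ratv_def
  by (rule rat_sum) (auto intro!: rat_mult rat_cnj)

lemma dz_herm:
  assumes "ratv N u" "ratv N v"
  shows "dz (\<lambda>z. herm N (u z) (v z)) = (\<lambda>z. herm N (u z) (dzvec v z) + herm N (dzbvec u z) (v z))"
proof -
  have r: "\<And>i. i < N \<Longrightarrow> rat (\<lambda>z. u z i)" "\<And>i. i < N \<Longrightarrow> rat (\<lambda>z. v z i)"
    using assms unfolding ratv_def by auto
  have w: "\<And>i. i \<in> {..<N} \<Longrightarrow> wd (\<lambda>z. cnj (u z i) * v z i)"
    using r by (auto intro!: rat_wd rat_mult rat_cnj)
  have "dz (\<lambda>z. herm N (u z) (v z)) = (\<lambda>z. \<Sum>i<N. dz (\<lambda>z. cnj (u z i) * v z i) z)"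
    unfolding herm_def by (rule wd_sum(2)[OF _ w]) auto
  also have "\<dots> = (\<lambda>z. \<Sum>i<N. cnj (u z i) * dz (\<lambda>z. v z i) z + cnj (dzb (\<lambda>z. u z i) z) * v z i)"
    by (intro ext sum.cong refl) (simp add: wd_mult wd_cnj rat_wd r)
  finally show ?thesis
    by (simp add: herm_def dzvec_def dzbvec_def sum.distrib)
qed

lemma dzb_herm:
  assumes "ratv N u" "ratv N v"
  shows "dzb (\<lambda>z. herm N (u z) (v z)) = (\<lambda>z. herm N (u z) (dzbvec v z) + herm N (dzvec u z) (v z))"
proof -
  have r: "\<And>i. i < N \<Longrightarrow> rat (\<lambda>z. u z i)" "\<And>i. i < N \<Longrightarrow> rat (\<lambda>z. v z i)"
    using assms unfolding ratv_def by auto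
  have w: "\<And>i. i \<in> {..<N} \<Longrightarrow> wd (\<lambda>z. cnj (u z i) * v z i)"
    using r by (auto intro!: rat_wd rat_mult rat_cnj)
  have "dzb (\<lambda>z. herm N (u z) (v z)) = (\<lambda>z. \<Sum>i<N. dzb (\<lambda>z. cnj (u z i) * v z i) z)"
    unfolding herm_def by (rule wd_sum(3)[OF _ w]) auto
  also have "\<dots> = (\<lambda>z. \<Sum>i<N. cnj (u z i) * dzb (\<lambda>z. v z i) z + cnj (dz (\<lambda>z. u z i) z) * v z i)"
    by (intro ext sum.cong refl) (simp add: wd_mult wd_cnj rat_wd r)
  finally show ?thesis
    by (simp add: herm_def dzvec_def dzbvec_def sum.distrib)
qed

definition rho :: "complex \<Rightarrow> complex" where "rho z = 1 + z * cnj z"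

lemma rho_real: "rho z = of_real (1 + (cmod z)\<^sup>2)"
  unfolding rho_def using complex_norm_square[of z] by simp

lemma rho_nz: "rho z \<noteq> 0"
  unfolding rho_real by (smt (verit) of_real_eq_0_iff zero_le_power2)

lemma rat_rho: "rat rho"
  using rat_add[OF rat_const[of 1] rat_mult[OF rat_id rat_cnj0]] unfolding rho_def[abs_def] .

lemma wd_rho: "wd rho" "dz rho = cnj" "dzb rho = (\<lambda>z. z)"
  unfolding rho_def[abs_def] by (simp_all add: wd_rules fun_eq_iff)



abbreviation ff :: "nat \<Rightarrow> nat \<Rightarrow> complex \<Rightarrow> nat \<Rightarrow> complex" where
  "ff N k \<equiv> (Pplus N ^^ k) (veronese N)"

definition nn :: "nat \<Rightarrow> nat \<Rightarrow> complex \<Rightarrow> complex" where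
  "nn N k z = herm N (ff N k z) (ff N k z)"

definition cc :: "nat \<Rightarrow> nat \<Rightarrow> real" where
  "cc N k = (\<Prod>i<k. real (Suc i * (N - 1 - i)))"

definition aa :: "nat \<Rightarrow> nat \<Rightarrow> complex \<Rightarrow> complex" where
  "aa N k z = of_nat (k * (N - k)) / rho z ^ 2"

definition bb :: "nat \<Rightarrow> nat \<Rightarrow> complex \<Rightarrow> complex" where
  "bb N k z = of_int (int N - 1 - 2 * int k) * cnj z / rho z"

definition SS :: "nat \<Rightarrow> nat \<Rightarrow> bool" where
  "SS N k \<longleftrightarrow> ratv N (ff N k)
     \<and> (\<forall>z. nn N k z = of_real (cc N k) * rho z ^ (N - 1) / rho z ^ (2 * k))
     \<and> (\<forall>j<k. \<forall>z. herm N (ff N j z) (ff N k z) = 0)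
     \<and> (\<forall>i<N. dzb (\<lambda>z. ff N k z i) = (\<lambda>z. - (aa N k z * ff N (k - 1) z i)))"

lemma herm_cong_left: "(\<And>i. i < N \<Longrightarrow> u i = u' i) \<Longrightarrow> herm N u v = herm N u' v"
  unfolding herm_def by (intro sum.cong) auto

lemma herm_cong_right: "(\<And>i. i < N \<Longrightarrow> v i = v' i) \<Longrightarrow> herm N u v = herm N u v'"
  unfolding herm_def by (intro sum.cong) auto

lemma cc_pos: assumes "k \<le> N - 1" shows "cc N k > 0"
proof -
  have "\<forall>i<k. 0 < Suc i * (N - 1 - i)" using assms by auto
  then show ?thesis unfolding cc_def by (intro prod_pos) (simp only: of_nat_0_less_iff; auto)
qed

lemma rat_bb: "rat (bb N k)"
  unfolding bb_def[abs_def]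
  by (intro rat_divide rat_mult rat_const rat_cnj0 rat_rho rho_nz)

lemma rat_aa: "rat (aa N k)"
  unfolding aa_def[abs_def]
  by (intro rat_divide rat_const rat_power rat_rho) (simp add: rho_nz)

lemma pow_pred: "of_nat n * r ^ (n - 1) * r = of_nat n * (r::complex) ^ n"
  by (cases n) auto

lemma base: assumes N: "N \<ge> 1" shows "SS N 0"
proof -
  have f0: "ff N 0 = veronese N" by simp
  have r: "ratv N (ff N 0)"
    unfolding ratv_def f0 veronese_def by (auto intro!: rat_mult rat_const rat_power rat_id)
  have n: "nn N 0 z = of_real (cc N 0) * rho z ^ (N - 1) / rho z ^ (2 * 0)" for z
  proof -
    have t: "cnj (veronese N z i) * veronese N z i = of_nat ((N - 1) choose i) * (z * cnj z) ^ i * 1 ^ (N - 1 - i)" for i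
    proof -
      define s where "s = sqrt (real ((N - 1) choose i))"
      have e: "complex_of_real s * of_real s = of_nat ((N - 1) choose i)"
        unfolding s_def of_real_mult[symmetric] by simp
      have "cnj (veronese N z i) * veronese N z i = (complex_of_real s * of_real s) * (z * cnj z) ^ i"
        unfolding veronese_def s_def[symmetric] by (simp add: power_mult_distrib)
      then show ?thesis unfolding e by simp
    qed
    have "nn N 0 z = (\<Sum>i<N. of_nat ((N - 1) choose i) * (z * cnj z) ^ i * 1 ^ (N - 1 - i))"
      unfolding nn_def f0 herm_def t ..
    also have "{..<N} = {..N - 1}" using N by auto
    also have "(\<Sum>i\<le>N - 1. of_nat ((N - 1) choose i) * (z * cnj z) ^ i * 1 ^ (N - 1 - i)) = (z * cnj z + 1) ^ (N - 1)"
      by (rule binomial_ring[symmetric])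
    finally show ?thesis by (simp add: cc_def rho_def add.commute)
  qed
  have d: "dzb (\<lambda>z. ff N 0 z i) = (\<lambda>z. - (aa N 0 z * ff N (0 - 1) z i))" for i
    unfolding f0 veronese_def aa_def by (simp add: wd_rules)
  show ?thesis unfolding SS_def using r n d by auto
qed

lemma alg_bb:
  fixes r w C :: complex
  assumes r: "r \<noteq> 0" and N: "N \<ge> 2"
  shows "(C * (of_nat (N - Suc 0) * r ^ (N - Suc (Suc 0)) * w) * r ^ (2 * k) - C * r ^ (N - Suc 0) * (2 * of_nat k * r ^ (2 * k - Suc 0) * w)) / (r ^ (2 * k))\<^sup>2
     = C * r ^ (N - Suc 0) * ((of_nat N - 1 - 2 * of_nat k) * w) / (r ^ (2 * k) * r)"
proof -
  obtain m where m: "N = Suc (Suc m)" using N by (metis add_2_eq_Suc le_Suc_ex)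
  show ?thesis
  proof (cases k)
    case 0 then show ?thesis using r by (simp add: m field_simps)
  next
    case (Suc j)
    have e: "2 * k - Suc 0 = Suc (2 * j)" "2 * k = Suc (Suc (2 * j))" using Suc by auto
    show ?thesis unfolding e using r by (simp add: m field_simps power2_eq_square)
  qed
qed

lemma bb_lemma:
  assumes N: "N \<ge> 2" and k: "k \<le> N - 1" and S: "\<And>k'. k' \<le> k \<Longrightarrow> SS N k'"
  shows "herm N (ff N k z) (dzvec (ff N k) z) = nn N k z * bb N k z"
proof -
  have Sk: "SS N k" using S by auto
  have rk: "ratv N (ff N k)" using Sk SS_def by auto
  have nf: "nn N k = (\<lambda>z. of_real (cc N k) * rho z ^ (N - 1) / rho z ^ (2 * k))"
    using Sk SS_def by auto
  have dk: "\<And>i. i < N \<Longrightarrow> dzb (\<lambda>z. ff N k z i) = (\<lambda>z. - (aa N k z * ff N (k - 1) z i))"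
    using Sk SS_def by auto
  have dn: "dz (nn N k) = (\<lambda>z. herm N (ff N k z) (dzvec (ff N k) z) + herm N (dzbvec (ff N k) z) (ff N k z))"
    unfolding nn_def[abs_def] by (rule dz_herm[OF rk rk])
  have h0: "herm N (dzbvec (ff N k) z) (ff N k z) = 0"
  proof -
    have "herm N (dzbvec (ff N k) z) (ff N k z) = herm N (\<lambda>i. (- aa N k z) * ff N (k - 1) z i) (ff N k z)"
      by (rule herm_cong_left) (simp add: dzbvec_def dk)
    also have "\<dots> = cnj (- aa N k z) * herm N (ff N (k - 1) z) (ff N k z)"
      by (rule herm_scale_left)
    also have "\<dots> = 0"
    proof (cases k)
      case 0 then show ?thesis by (simp add: aa_def)
    next
      case (Suc k') then have "herm N (ff N (k - 1) z) (ff N k z) = 0" using Sk SS_def by auto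
      then show ?thesis by simp
    qed
    finally show ?thesis .
  qed
  have "dz (nn N k) z = nn N k z * bb N k z"
    unfolding nf apply (simp add: wd_rules wd_divide wd_rho rho_nz bb_def)
    by (rule alg_bb[OF rho_nz N])
  moreover have "dz (nn N k) z = herm N (ff N k z) (dzvec (ff N k) z)"
    using h0 by (simp add: dn)
  ultimately show ?thesis by simp
qed



lemma alg_step:
  fixes X Y w r A B Cc D :: complex
  assumes r: "r \<noteq> 0" and h1: "A + Cc = D" and h2: "Cc = B - 2"
  shows "- (A / r ^ 2 * (X + B * w / r * Y) + (- (2 * A * w / r ^ 3)) * Y)
         - (X * (Cc / r ^ 2) + (- (A / r ^ 2 * Y)) * (Cc * w / r)) = - (D / r ^ 2 * X)"
proof -
  have hB: "B = Cc + 2" and hD: "D = A + Cc" using h1 h2 by (auto simp: algebra_simps)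
  show ?thesis unfolding hB hD using r by (simp add: field_simps power2_eq_square power3_eq_cube)
qed

lemma cast1:
  assumes "Suc k \<le> N - 1"
  shows "(of_nat (k * (N - k)) :: complex) + of_int (int N - 1 - 2 * int k) = of_nat (Suc k * (N - Suc k))"
proof -
  have "Suc (Suc k) \<le> N" using assms by arith
  then obtain m0 where "N = Suc (Suc k) + m0" using le_Suc_ex by blast
  then have m: "N = Suc (Suc (k + m0))" by simp
  show ?thesis unfolding m by (simp add: algebra_simps)
qed

lemma dzb_bb: "dzb (bb N k) = (\<lambda>z. of_int (int N - 1 - 2 * int k) / rho z ^ 2)"
  unfolding bb_def[abs_def] apply (simp add: wd_rules wd_divide wd_rho rho_nz)
  by (simp add: fun_eq_iff rho_def algebra_simps)

lemma dz_aa: "dz (aa N k) = (\<lambda>z. - (2 * of_nat (k * (N - k)) * cnj z / rho z ^ 3))"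
  unfolding aa_def[abs_def] apply (simp add: wd_rules wd_divide wd_rho rho_nz)
  by (simp add: fun_eq_iff rho_nz field_simps power2_eq_square power3_eq_cube eval_nat_numeral)

lemma vec_lemma:
  assumes N: "N \<ge> 2" and k: "Suc k \<le> N - 1" and S: "\<And>k'. k' \<le> k \<Longrightarrow> SS N k'"
  shows "ff N (Suc k) z = (\<lambda>i. dzvec (ff N k) z i - bb N k z * ff N k z i)"
proof -
  have Sk: "SS N k" using S by auto
  have nnz: "nn N k z \<noteq> 0"
    using Sk cc_pos[of k N] k rho_nz[of z] unfolding SS_def by auto
  have bl: "herm N (ff N k z) (dzvec (ff N k) z) = nn N k z * bb N k z"
    by (rule bb_lemma[OF N _ S]) (use k in auto)
  show ?thesis using nnz unfolding nn_def
    by (simp add: Pplus_def bl[unfolded nn_def] fun_eq_iff mult.commute)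
qed

lemma step:
  assumes N: "N \<ge> 2" and k: "Suc k \<le> N - 1" and S: "\<And>k'. k' \<le> k \<Longrightarrow> SS N k'"
  shows "SS N (Suc k)"
proof -
  have Sk: "SS N k" using S by auto
  have rk: "ratv N (ff N k)" using Sk SS_def by auto
  have ri: "\<And>i. i < N \<Longrightarrow> rat (\<lambda>z. ff N k z i)" using rk ratv_def by auto
  have nfk: "\<And>z. nn N k z = of_real (cc N k) * rho z ^ (N - 1) / rho z ^ (2 * k)"
    using Sk SS_def by auto
  have ok: "\<And>j z. j < k \<Longrightarrow> herm N (ff N j z) (ff N k z) = 0" using Sk SS_def by auto
  have dk: "\<And>i. i < N \<Longrightarrow> dzb (\<lambda>z. ff N k z i) = (\<lambda>z. - (aa N k z * ff N (k - 1) z i))"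
    using Sk SS_def by auto
  have bl: "\<And>z. herm N (ff N k z) (dzvec (ff N k) z) = nn N k z * bb N k z"
    by (rule bb_lemma[OF N _ S]) (use k in auto)
  have vec: "\<And>z. ff N (Suc k) z = (\<lambda>i. dzvec (ff N k) z i - bb N k z * ff N k z i)"
    by (rule vec_lemma[OF N k S])
  have comp: "\<And>i. (\<lambda>z. ff N (Suc k) z i) = (\<lambda>z. dz (\<lambda>w. ff N k w i) z - ff N k z i * bb N k z)"
    using vec by (simp add: dzvec_def fun_eq_iff mult.commute)
  have rs: "ratv N (ff N (Suc k))"
    unfolding ratv_def comp
    by (auto intro!: rat_diff rat_dz rat_mult ri rat_bb)
  have os: "herm N (ff N j z) (ff N (Suc k) z) = 0" if j: "j < Suc k" for j z
  proof -
    have e: "herm N (ff N j z) (ff N (Suc k) z)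
        = herm N (ff N j z) (dzvec (ff N k) z) - bb N k z * herm N (ff N j z) (ff N k z)"
      unfolding vec herm_diff_right herm_scale_right ..
    show ?thesis
    proof (cases "j = k")
      case True then show ?thesis unfolding e using bl[of z] by (simp add: nn_def mult.commute)
    next
      case False
      then have jk: "j < k" using j by auto
      have Sj: "SS N j" using S jk by auto
      have rj: "ratv N (ff N j)" using Sj SS_def by auto
      have dj: "\<And>i. i < N \<Longrightarrow> dzb (\<lambda>z. ff N j z i) = (\<lambda>z. - (aa N j z * ff N (j - 1) z i))"
        using Sj SS_def by auto
      have z0: "(\<lambda>z. herm N (ff N j z) (ff N k z)) = (\<lambda>z. 0)" using ok jk by auto
      have "dz (\<lambda>z. herm N (ff N j z) (ff N k z)) z = 0" unfolding z0 wd_const by simp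
      then have s0: "herm N (ff N j z) (dzvec (ff N k) z) + herm N (dzbvec (ff N j) z) (ff N k z) = 0"
        unfolding dz_herm[OF rj rk] by simp
      have "herm N (dzbvec (ff N j) z) (ff N k z) = herm N (\<lambda>i. (- aa N j z) * ff N (j - 1) z i) (ff N k z)"
        by (rule herm_cong_left) (simp add: dzbvec_def dj)
      also have "\<dots> = cnj (- aa N j z) * herm N (ff N (j - 1) z) (ff N k z)"
        by (rule herm_scale_left)
      also have "\<dots> = 0" using ok[of "j - 1" z] jk by simp
      finally have "herm N (ff N j z) (dzvec (ff N k) z) = 0" using s0 by simp
      then show ?thesis unfolding e using ok[OF jk] by simp
    qed
  qed
  have ds: "dzb (\<lambda>z. ff N (Suc k) z i) = (\<lambda>z. - (aa N (Suc k) z * ff N (Suc k - 1) z i))"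
    if i: "i < N" for i
  proof -
    have w: "wd (\<lambda>z. ff N k z i)" "wd (dz (\<lambda>z. ff N k z i))" "wd (bb N k)"
      using ri[OF i] by (auto intro!: rat_wd rat_dz rat_bb)
    have c: "dzb (dz (\<lambda>z. ff N k z i)) = dz (\<lambda>z. - (aa N k z * ff N (k - 1) z i))"
      using rat_commute[OF ri[OF i]] dk[OF i] by simp
    have e1: "dzb (\<lambda>z. ff N (Suc k) z i)
       = (\<lambda>z. dz (\<lambda>z. - (aa N k z * ff N (k - 1) z i)) z
             - (ff N k z i * (of_int (int N - 1 - 2 * int k) / rho z ^ 2) + (- (aa N k z * ff N (k - 1) z i)) * bb N k z))"
      unfolding comp using w by (simp add: wd_diff wd_mult c dzb_bb dk[OF i])
    show ?thesis
    proof (cases k)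
      case 0
      have a0: "(\<lambda>z. - (aa N 0 z * ff N (0 - 1) z i)) = (\<lambda>z. 0)" by (simp add: aa_def)
      have "of_int (int N - 1) = (of_nat (N - 1) :: complex)" using N by (simp add: of_nat_diff)
      note e1' = e1[unfolded 0 a0 wd_const]
      show ?thesis unfolding 0 e1' using N \<open>of_int (int N - 1) = (of_nat (N - 1) :: complex)\<close>
        by (simp add: aa_def fun_eq_iff bb_def)
    next
      case (Suc k')
      have S': "\<And>k''. k'' \<le> k' \<Longrightarrow> SS N k''" using S Suc by auto
      have rk': "rat (\<lambda>z. ff N k' z i)" using S'[of k'] i unfolding SS_def ratv_def by auto
      have vec': "\<And>z. ff N k z = (\<lambda>i. dzvec (ff N k') z i - bb N k' z * ff N k' z i)"
        unfolding Suc by (rule vec_lemma[OF N _ S']) (use k Suc in auto)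
      have dk': "dz (\<lambda>z. ff N k' z i) = (\<lambda>z. ff N k z i + bb N k' z * ff N k' z i)"
        using vec' by (simp add: dzvec_def fun_eq_iff)
      have e2: "dz (\<lambda>z. - (aa N k z * ff N (k - 1) z i))
          = (\<lambda>z. - (aa N k z * (ff N k z i + bb N k' z * ff N k' z i) + (- (2 * of_nat (k * (N - k)) * cnj z / rho z ^ 3)) * ff N k' z i))"
        using rk' rat_aa[of N k] unfolding Suc
        by (simp add: wd_minus wd_mult rat_wd dk'[unfolded Suc] dz_aa)
      show ?thesis
      proof (rule ext)
        fix z
        have h1: "(of_nat (k * (N - k)) :: complex) + of_int (int N - 1 - 2 * int k) = of_nat (Suc k * (N - Suc k))"
          by (rule cast1[OF k])
        have h2: "(of_int (int N - 1 - 2 * int k) :: complex) = of_int (int N - 1 - 2 * int k') - 2"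
          using Suc by simp
        have "dzb (\<lambda>z. ff N (Suc k) z i) z
          = - (of_nat (k * (N - k)) / rho z ^ 2 * (ff N k z i + of_int (int N - 1 - 2 * int k') * cnj z / rho z * ff N k' z i)
               + (- (2 * of_nat (k * (N - k)) * cnj z / rho z ^ 3)) * ff N k' z i)
            - (ff N k z i * (of_int (int N - 1 - 2 * int k) / rho z ^ 2)
               + (- (of_nat (k * (N - k)) / rho z ^ 2 * ff N k' z i)) * (of_int (int N - 1 - 2 * int k) * cnj z / rho z))"
          unfolding e1 e2 by (simp add: aa_def bb_def Suc)
        also have "\<dots> = - (of_nat (Suc k * (N - Suc k)) / rho z ^ 2 * ff N k z i)"
          by (rule alg_step[OF rho_nz h1 h2])
        finally show "dzb (\<lambda>z. ff N (Suc k) z i) z = - (aa N (Suc k) z * ff N (Suc k - 1) z i)"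
          by (simp add: aa_def)
      qed
    qed
  qed
  have ns: "nn N (Suc k) z = of_real (cc N (Suc k)) * rho z ^ (N - 1) / rho z ^ (2 * Suc k)" for z
  proof -
    have z0: "(\<lambda>z. herm N (ff N k z) (ff N (Suc k) z)) = (\<lambda>z. 0)" using os by auto
    have "dzb (\<lambda>z. herm N (ff N k z) (ff N (Suc k) z)) z = 0" unfolding z0 wd_const by simp
    then have s0: "herm N (ff N k z) (dzbvec (ff N (Suc k)) z) + herm N (dzvec (ff N k) z) (ff N (Suc k) z) = 0"
      unfolding dzb_herm[OF rk rs] by simp
    have t1: "herm N (ff N k z) (dzbvec (ff N (Suc k)) z) = - aa N (Suc k) z * nn N k z"
    proof -
      have "herm N (ff N k z) (dzbvec (ff N (Suc k)) z) = herm N (ff N k z) (\<lambda>i. (- aa N (Suc k) z) * ff N k z i)"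
        by (rule herm_cong_right) (simp only: dzbvec_def ds, simp)
      also have "\<dots> = - aa N (Suc k) z * nn N k z" unfolding herm_scale_right nn_def ..
      finally show ?thesis .
    qed
    have dv: "dzvec (ff N k) z = (\<lambda>i. ff N (Suc k) z i + bb N k z * ff N k z i)"
      using vec[of z] by (simp add: fun_eq_iff)
    have t2: "herm N (dzvec (ff N k) z) (ff N (Suc k) z) = nn N (Suc k) z"
      unfolding dv herm_add_left herm_scale_left nn_def using os[of k z] by simp
    have "nn N (Suc k) z = aa N (Suc k) z * nn N k z" using s0 t1 t2
      by (simp add: algebra_simps)
    also have "\<dots> = of_real (cc N (Suc k)) * rho z ^ (N - 1) / rho z ^ (2 * Suc k)"
      unfolding nfk aa_def cc_def using rho_nz[of z]
      by (simp add: field_simps power2_eq_square mult_ac)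
    finally show ?thesis .
  qed
  show ?thesis unfolding SS_def using rs ns os ds by auto
qed



lemma all_SS: "N \<ge> 2 \<Longrightarrow> k \<le> N - 1 \<Longrightarrow> \<forall>k'\<le>k. SS N k'"
proof (induction k)
  case 0 then show ?case using base[of N] by auto
next
  case (Suc k)
  then have IH: "\<forall>k'\<le>k. SS N k'" by auto
  have "SS N (Suc k)" by (rule step) (use Suc IH in auto)
  then show ?case using IH le_Suc_eq by auto
qed

context
  fixes N :: nat
  assumes N: "N \<ge> 2"
begin

lemma SSk: "k \<le> N - 1 \<Longrightarrow> SS N k" using all_SS[OF N] by auto

lemma F_orth: "j \<le> N - 1 \<Longrightarrow> k \<le> N - 1 \<Longrightarrow> j \<noteq> k \<Longrightarrow> herm N (ff N j z) (ff N k z) = 0"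
proof -
  assume a: "j \<le> N - 1" "k \<le> N - 1" "j \<noteq> k"
  show ?thesis
  proof (cases "j < k")
    case True then show ?thesis using SSk[OF a(2)] SS_def by auto
  next
    case False then have "k < j" using a by auto
    then have "herm N (ff N k z) (ff N j z) = 0" using SSk[OF a(1)] SS_def by auto
    then show ?thesis using herm_cnj[of N "ff N k z" "ff N j z"] by simp
  qed
qed

lemma F_nf: "k \<le> N - 1 \<Longrightarrow> nn N k z = of_real (cc N k) * rho z ^ (N - 1) / rho z ^ (2 * k)"
  using SSk SS_def by auto

lemma F_nz: "k \<le> N - 1 \<Longrightarrow> nn N k z \<noteq> 0"
  using F_nf[of k z] cc_pos[of k N] rho_nz[of z] by auto

lemma F_rat: "k \<le> N - 1 \<Longrightarrow> i < N \<Longrightarrow> rat (\<lambda>z. ff N k z i)"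
  using SSk SS_def ratv_def by auto

lemma F_ratv: "k \<le> N - 1 \<Longrightarrow> ratv N (ff N k)"
  using SSk SS_def by auto

lemma F_dzb: "k \<le> N - 1 \<Longrightarrow> i < N \<Longrightarrow> dzb (\<lambda>z. ff N k z i) = (\<lambda>z. - (aa N k z * ff N (k - 1) z i))"
  using SSk SS_def by auto

lemma F_dz: "k \<le> N - 2 \<Longrightarrow> dz (\<lambda>z. ff N k z i) = (\<lambda>z. ff N (Suc k) z i + bb N k z * ff N k z i)"
proof -
  assume k: "k \<le> N - 2"
  have "ff N (Suc k) z = (\<lambda>i. dzvec (ff N k) z i - bb N k z * ff N k z i)" for z
    by (rule vec_lemma[OF N]) (use k N in \<open>auto intro: SSk\<close>)
  then show ?thesis by (simp add: dzvec_def fun_eq_iff)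
qed

lemma F_rec: "k \<le> N - 2 \<Longrightarrow> nn N (Suc k) z = aa N (Suc k) z * nn N k z"
proof -
  assume k: "k \<le> N - 2"
  have a: "nn N k z = of_real (cc N k) * rho z ^ (N - 1) / rho z ^ (2 * k)"
    using F_nf[of k z] k by auto
  have b: "nn N (Suc k) z = of_real (cc N (Suc k)) * rho z ^ (N - 1) / rho z ^ (2 * Suc k)"
    using F_nf[of "Suc k" z] k N by auto
  show ?thesis unfolding a b using k N
    unfolding aa_def cc_def using rho_nz[of z]
    by (simp add: field_simps power2_eq_square mult_ac)
qed

lemma F_dnn: "k \<le> N - 1 \<Longrightarrow> dz (nn N k) z = nn N k z * bb N k z"
proof -
  assume k: "k \<le> N - 1"
  have nf: "nn N k = (\<lambda>z. of_real (cc N k) * rho z ^ (N - 1) / rho z ^ (2 * k))"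
    using F_nf[OF k] by auto
  show ?thesis
    unfolding nf apply (simp add: wd_rules wd_divide wd_rho rho_nz bb_def)
    by (rule alg_bb[OF rho_nz N])
qed

lemma rat_nn: "k \<le> N - 1 \<Longrightarrow> rat (nn N k)"
  unfolding nn_def[abs_def] using F_ratv by (auto intro: rat_herm)

lemma nn_real: "cnj (nn N k z) = nn N k z"
  unfolding nn_def herm_cnj ..

lemma aa_real: "cnj (aa N k z) = aa N k z"
  unfolding aa_def rho_real by simp

definition EE :: "nat \<Rightarrow> complex \<Rightarrow> nat \<Rightarrow> nat \<Rightarrow> complex" where
  "EE k z i j = ff N (Suc k) z i * cnj (ff N k z j) / nn N k z"

lemma proj_eq: "projector N k z i j = ff N k z i * cnj (ff N k z j) / nn N k z"
  unfolding projector_def nn_def Let_def ..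

lemma dproj:
  assumes k: "k \<le> N - 2" and i: "i < N" and j: "j < N"
  shows "dz (\<lambda>w. projector N k w i j) z = EE k z i j - (if k = 0 then 0 else EE (k - 1) z i j)"
proof -
  have k1: "k \<le> N - 1" using k by auto
  have w: "wd (\<lambda>z. ff N k z i)" "wd (\<lambda>z. ff N k z j)" "wd (nn N k)"
    using F_rat[OF k1 i] F_rat[OF k1 j] rat_nn[OF k1] by (auto intro: rat_wd)
  have "dz (\<lambda>w. projector N k w i j) z
     = ((dz (\<lambda>z. ff N k z i) z * cnj (ff N k z j) + ff N k z i * cnj (dzb (\<lambda>z. ff N k z j) z)) * nn N k z
        - ff N k z i * cnj (ff N k z j) * dz (nn N k) z) / nn N k z ^ 2"
    unfolding proj_eq using w F_nz[OF k1]
    by (simp add: wd_divide wd_mult wd_cnj algebra_simps)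
  also have "\<dots> = (((ff N (Suc k) z i + bb N k z * ff N k z i) * cnj (ff N k z j)
        - ff N k z i * (aa N k z * cnj (ff N (k - 1) z j))) * nn N k z
        - ff N k z i * cnj (ff N k z j) * (nn N k z * bb N k z)) / nn N k z ^ 2"
    unfolding F_dz[OF k] F_dzb[OF k1 j] F_dnn[OF k1] by (simp add: aa_real algebra_simps)
  also have "\<dots> = EE k z i j - aa N k z * ff N k z i * cnj (ff N (k - 1) z j) / nn N k z"
    unfolding EE_def using F_nz[OF k1, of z] by (simp add: field_simps power2_eq_square)
  also have "\<dots> = EE k z i j - (if k = 0 then 0 else EE (k - 1) z i j)"
  proof (cases k)
    case 0 then show ?thesis by (simp add: aa_def)
  next
    case (Suc k')
    have "nn N k z = aa N k z * nn N k' z" unfolding Suc by (rule F_rec) (use k Suc in auto)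
    moreover have "nn N k' z \<noteq> 0" using F_nz[of k' z] k Suc by auto
    moreover have "aa N k z \<noteq> 0" using F_nz[OF k1, of z] calculation by auto
    ultimately show ?thesis unfolding EE_def using Suc by (simp add: field_simps)
  qed
  finally show ?thesis .
qed

end



lemma tele:
  fixes a :: "nat \<Rightarrow> complex"
  shows "(\<Sum>k\<le>M. a k * (E k - (if k = 0 then 0 else E (k - 1))))
       = (\<Sum>k\<le>M. (a k - (if k < M then a (Suc k) else 0)) * E k)"
proof (induction M)
  case 0 then show ?case by simp
next
  case (Suc M)
  have "(\<Sum>k\<le>Suc M. (a k - (if k < Suc M then a (Suc k) else 0)) * E k)
      = (\<Sum>k\<le>M. (a k - a (Suc k)) * E k) + a (Suc M) * E (Suc M)"
    by (simp add: sum.atMost_Suc)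
  also have "(\<Sum>k\<le>M. (a k - a (Suc k)) * E k) = (\<Sum>k\<le>M. (a k - (if k < M then a (Suc k) else 0)) * E k) - a (Suc M) * E M"
  proof -
    have "(\<Sum>k\<le>M. (a k - a (Suc k)) * E k) = (\<Sum>k\<le>M. (a k - (if k < M then a (Suc k) else 0)) * E k - (if k = M then a (Suc M) * E M else 0))"
      by (intro sum.cong) (auto simp: algebra_simps)
    also have "\<dots> = (\<Sum>k\<le>M. (a k - (if k < M then a (Suc k) else 0)) * E k) - a (Suc M) * E M"
      by (simp add: sum_subtractf)
    finally show ?thesis .
  qed
  finally show ?case using Suc by (simp add: sum.atMost_Suc algebra_simps)
qed

lemma trprod_cong:
  "(\<And>i j. i < N \<Longrightarrow> j < N \<Longrightarrow> A i j = A' i j) \<Longrightarrow> (\<And>i j. i < N \<Longrightarrow> j < N \<Longrightarrow> B i j = B' i j)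
   \<Longrightarrow> trprod N A B = trprod N A' B'"
  unfolding trprod_def by (intro sum.cong refl) auto

lemma trprod_sums:
  "trprod N (\<lambda>i j. \<Sum>k\<in>K. g k * X k i j) (\<lambda>i j. \<Sum>l\<in>K. h l * Y l i j)
   = (\<Sum>k\<in>K. \<Sum>l\<in>K. g k * h l * trprod N (X k) (Y l))"
proof -
  have "trprod N (\<lambda>i j. \<Sum>k\<in>K. g k * X k i j) (\<lambda>i j. \<Sum>l\<in>K. h l * Y l i j)
      = (\<Sum>i<N. \<Sum>j<N. \<Sum>k\<in>K. \<Sum>l\<in>K. g k * h l * (X k i j * Y l j i))"
    unfolding trprod_def sum_product by (simp add: mult_ac)
  also have "\<dots> = (\<Sum>i<N. \<Sum>k\<in>K. \<Sum>j<N. \<Sum>l\<in>K. g k * h l * (X k i j * Y l j i))"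
    by (simp add: sum.swap[of _ "{..<N}" K])
  also have "\<dots> = (\<Sum>k\<in>K. \<Sum>i<N. \<Sum>j<N. \<Sum>l\<in>K. g k * h l * (X k i j * Y l j i))"
    by (rule sum.swap)
  also have "\<dots> = (\<Sum>k\<in>K. \<Sum>i<N. \<Sum>l\<in>K. \<Sum>j<N. g k * h l * (X k i j * Y l j i))"
    by (simp add: sum.swap[of _ "{..<N}" K])
  also have "\<dots> = (\<Sum>k\<in>K. \<Sum>l\<in>K. \<Sum>i<N. \<Sum>j<N. g k * h l * (X k i j * Y l j i))"
    by (simp add: sum.swap[of _ "{..<N}" K])
  also have "\<dots> = (\<Sum>k\<in>K. \<Sum>l\<in>K. g k * h l * trprod N (X k) (Y l))"
    unfolding trprod_def by (simp add: sum_distrib_left)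
  finally show ?thesis .
qed

lemma tr_outer:
  "(\<Sum>i<N. \<Sum>j<N. (a i * cnj (b j) / p) * (c j * cnj (d i) / q)) = herm N d a * herm N b c / (p * q)"
  unfolding herm_def sum_product sum_divide_distrib by (intro sum.cong refl) (simp add: field_simps)

definition gam :: "nat \<Rightarrow> (nat \<Rightarrow> real) \<Rightarrow> nat \<Rightarrow> real" where
  "gam N \<alpha> k = \<alpha> k - (if k < N - 2 then \<alpha> (Suc k) else 0)"

context
  fixes N :: nat
  assumes N: "N \<ge> 2"
begin

lemma rat_proj: "k \<le> N - 1 \<Longrightarrow> i < N \<Longrightarrow> j < N \<Longrightarrow> rat (\<lambda>w. projector N k w i j)"
  unfolding proj_eq[OF N]
  by (intro rat_divide rat_mult rat_cnj F_rat[OF N] rat_nn[OF N] F_nz[OF N])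

lemma dPmat:
  assumes i: "i < N" and j: "j < N"
  shows "dz (\<lambda>w. Pmat N \<alpha> w i j) z = (\<Sum>k\<le>N - 2. of_real (gam N \<alpha> k) * EE N k z i j)"
proof -
  have w: "\<And>k. k \<in> {..N - 2} \<Longrightarrow> wd (\<lambda>w. of_real (\<alpha> k) * projector N k w i j)"
    using i j by (auto intro!: rat_wd rat_mult rat_const rat_proj)
  have wp: "\<And>k. k \<in> {..N - 2} \<Longrightarrow> wd (\<lambda>w. projector N k w i j)"
    using i j by (auto intro!: rat_wd rat_proj)
  have e: "(\<lambda>w. Pmat N \<alpha> w i j) = (\<lambda>w. \<Sum>k\<in>{..N - 2}. of_real (\<alpha> k) * projector N k w i j)"
    unfolding Pmat_def by simp
  have "dz (\<lambda>w. \<Sum>k\<in>{..N - 2}. of_real (\<alpha> k) * projector N k w i j) = (\<lambda>z. \<Sum>k\<in>{..N - 2}. dz (\<lambda>w. of_real (\<alpha> k) * projector N k w i j) z)"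
    by (rule wd_sum(2)[OF _ w]) simp
  then have "dz (\<lambda>w. Pmat N \<alpha> w i j) z = (\<Sum>k\<le>N - 2. dz (\<lambda>w. of_real (\<alpha> k) * projector N k w i j) z)"
    unfolding e by simp
  also have "\<dots> = (\<Sum>k\<le>N - 2. of_real (\<alpha> k) * (EE N k z i j - (if k = 0 then 0 else EE N (k - 1) z i j)))"
    by (intro sum.cong refl) (simp add: wd_mult wd_const wp dproj[OF N _ i j])
  also have "\<dots> = (\<Sum>k\<le>N - 2. (of_real (\<alpha> k) - (if k < N - 2 then of_real (\<alpha> (Suc k)) else 0)) * EE N k z i j)"
    by (rule tele)
  also have "\<dots> = (\<Sum>k\<le>N - 2. of_real (gam N \<alpha> k) * EE N k z i j)"
    by (intro sum.cong refl) (simp add: gam_def)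
  finally show ?thesis .
qed

lemma Pmat_herm: "Pmat N \<alpha> w i j = cnj (Pmat N \<alpha> w j i)"
  unfolding Pmat_def proj_eq[OF N] cnj_sum by (intro sum.cong refl) (simp add: nn_real[OF N] mult.commute)

lemma dbPmat:
  assumes i: "i < N" and j: "j < N"
  shows "dzb (\<lambda>w. Pmat N \<alpha> w i j) z = (\<Sum>k\<le>N - 2. of_real (gam N \<alpha> k) * cnj (EE N k z j i))"
proof -
  have e: "(\<lambda>w. Pmat N \<alpha> w i j) = (\<lambda>w. cnj (Pmat N \<alpha> w j i))"
    by (rule ext) (rule Pmat_herm)
  have w: "wd (\<lambda>w. Pmat N \<alpha> w j i)"
    unfolding Pmat_def using i j
    by (auto intro!: rat_wd rat_sum rat_mult rat_const rat_proj)
  show ?thesis unfolding e wd_cnj(3)[OF w] using dPmat[OF j i] by simp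
qed

lemma gpp_zero: "gpp N \<alpha> z = 0"
proof -
  have "gpp N \<alpha> z = trprod N (\<lambda>i j. \<Sum>k\<le>N - 2. of_real (gam N \<alpha> k) * EE N k z i j)
                              (\<lambda>i j. \<Sum>k\<le>N - 2. of_real (gam N \<alpha> k) * EE N k z i j)"
    unfolding gpp_def by (rule trprod_cong) (simp_all add: dPmat)
  also have "\<dots> = (\<Sum>k\<le>N - 2. \<Sum>l\<le>N - 2. of_real (gam N \<alpha> k) * of_real (gam N \<alpha> l) * trprod N (EE N k z) (EE N l z))"
    by (rule trprod_sums)
  also have "\<dots> = 0"
  proof (intro sum.neutral ballI)
    fix k l assume k: "k \<in> {..N - 2}" and l: "l \<in> {..N - 2}"
    have "trprod N (EE N k z) (EE N l z)
       = herm N (ff N l z) (ff N (Suc k) z) * herm N (ff N k z) (ff N (Suc l) z) / (nn N k z * nn N l z)"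
      unfolding trprod_def EE_def[OF N] by (rule tr_outer)
    also have "\<dots> = 0"
    proof (cases "l = Suc k")
      case True
      then have "herm N (ff N k z) (ff N (Suc l) z) = 0" using l N by (intro F_orth[OF N]) auto
      then show ?thesis by simp
    next
      case False
      then have "herm N (ff N l z) (ff N (Suc k) z) = 0" using k l N by (intro F_orth[OF N]) auto
      then show ?thesis by simp
    qed
    finally show "of_real (gam N \<alpha> k) * of_real (gam N \<alpha> l) * trprod N (EE N k z) (EE N l z) = 0" by simp
  qed
  finally show ?thesis .
qed

lemma gpm_val: "gpm N \<alpha> z = (\<Sum>k\<le>N - 2. of_real (gam N \<alpha> k) * of_real (gam N \<alpha> k) * aa N (Suc k) z)"
proof -
  have "gpm N \<alpha> z = trprod N (\<lambda>i j. \<Sum>k\<le>N - 2. of_real (gam N \<alpha> k) * EE N k z i j)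
                              (\<lambda>i j. \<Sum>k\<le>N - 2. of_real (gam N \<alpha> k) * cnj (EE N k z j i))"
    unfolding gpm_def by (rule trprod_cong) (simp_all add: dPmat dbPmat)
  also have "\<dots> = (\<Sum>k\<le>N - 2. \<Sum>l\<le>N - 2. of_real (gam N \<alpha> k) * of_real (gam N \<alpha> l) * trprod N (EE N k z) (\<lambda>i j. cnj (EE N l z j i)))"
    by (rule trprod_sums)
  also have "\<dots> = (\<Sum>k\<le>N - 2. \<Sum>l\<le>N - 2. if l = k then of_real (gam N \<alpha> k) * of_real (gam N \<alpha> k) * aa N (Suc k) z else 0)"
  proof (intro sum.cong refl)
    fix k l assume k: "k \<in> {..N - 2}" and l: "l \<in> {..N - 2}"
    have "trprod N (EE N k z) (\<lambda>i j. cnj (EE N l z j i))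
       = (\<Sum>i<N. \<Sum>j<N. (ff N (Suc k) z i * cnj (ff N k z j) / nn N k z) * (ff N l z j * cnj (ff N (Suc l) z i) / nn N l z))"
      unfolding trprod_def EE_def[OF N] by (intro sum.cong refl) (simp add: nn_real[OF N])
    also have "\<dots> = herm N (ff N (Suc l) z) (ff N (Suc k) z) * herm N (ff N k z) (ff N l z) / (nn N k z * nn N l z)"
      by (rule tr_outer)
    also have "\<dots> = (if l = k then aa N (Suc k) z else 0)"
    proof (cases "l = k")
      case True
      have "nn N (Suc k) z = aa N (Suc k) z * nn N k z" using k by (intro F_rec[OF N]) auto
      moreover have "nn N k z \<noteq> 0" using k N by (intro F_nz[OF N]) auto
      ultimately show ?thesis unfolding True nn_def[symmetric] by simp
    next
      case False
      then have "herm N (ff N k z) (ff N l z) = 0" using k l N by (intro F_orth[OF N]) auto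
      then show ?thesis using False by simp
    qed
    finally show "of_real (gam N \<alpha> k) * of_real (gam N \<alpha> l) * trprod N (EE N k z) (\<lambda>i j. cnj (EE N l z j i))
        = (if l = k then of_real (gam N \<alpha> k) * of_real (gam N \<alpha> k) * aa N (Suc k) z else 0)"
      by simp
  qed
  also have "\<dots> = (\<Sum>k\<le>N - 2. of_real (gam N \<alpha> k) * of_real (gam N \<alpha> k) * aa N (Suc k) z)"
    by (intro sum.cong refl) (simp add: sum.delta)
  finally show ?thesis .
qed

end



lemma wd_Ln:
  assumes w: "wd H" and nr: "\<And>z. H z \<notin> \<real>\<^sub>\<le>\<^sub>0"
  shows "wd (\<lambda>z. Ln (H z))" "dz (\<lambda>z. Ln (H z)) = (\<lambda>z. dz H z / H z)"
    "dzb (\<lambda>z. Ln (H z)) = (\<lambda>z. dzb H z / H z)"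
proof -
  have "((\<lambda>z. Ln (H z)) has_derivative (\<lambda>h. (dz H z / H z) * h + (dzb H z / H z) * cnj h)) (at z)" for z
  proof -
    have "(Ln has_derivative (*) (inverse (H z))) (at (H z))"
      using has_field_derivative_Ln[OF nr[of z]] by (simp add: has_field_derivative_def)
    from has_derivative_compose[OF wdD[OF w] this] show ?thesis
      by (rule has_derivative_eq_rhs) (simp add: fun_eq_iff divide_inverse algebra_simps)
  qed
  then show "wd (\<lambda>z. Ln (H z))" "dz (\<lambda>z. Ln (H z)) = (\<lambda>z. dz H z / H z)"
    "dzb (\<lambda>z. Ln (H z)) = (\<lambda>z. dzb H z / H z)" by (rule wdI)+
qed

lemma gam_nonzero:
  fixes \<alpha> :: "nat \<Rightarrow> real"
  assumes "\<exists>k\<le>M. \<alpha> k \<noteq> 0"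
  shows "\<exists>k\<le>M. \<alpha> k - (if k < M then \<alpha> (Suc k) else 0) \<noteq> 0"
proof (rule ccontr)
  assume "\<not> ?thesis"
  then have h: "\<And>k. k \<le> M \<Longrightarrow> \<alpha> k - (if k < M then \<alpha> (Suc k) else 0) = 0" by auto
  have "\<alpha> (M - d) = 0" for d
  proof (induction d)
    case 0 then show ?case using h[of M] by simp
  next
    case (Suc d)
    show ?case
    proof (cases "d < M")
      case True
      then have "Suc (M - Suc d) = M - d" by auto
      then show ?thesis using h[of "M - Suc d"] Suc True by auto
    next
      case False then show ?thesis using Suc by auto
    qed
  qed
  then have "\<alpha> k = 0" if "k \<le> M" for k using that by (metis diff_diff_cancel)
  then show False using assms by auto
qed

theorem mainTheorem2:
  fixes N :: nat and \<alpha> :: "nat \<Rightarrow> real"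
  assumes "N \<ge> 2"
    and "\<exists>k\<le>N - 2. \<alpha> k \<noteq> 0"
  shows "\<exists>a::real. a > 0
     \<and> (\<forall>z. gpp N \<alpha> z = 0)
     \<and> (\<forall>z. gpm N \<alpha> z = of_real (a / (1 + (cmod z)\<^sup>2)\<^sup>2))
     \<and> (\<forall>z. - 4 / gpm N \<alpha> z * dz (dzb (\<lambda>w. Ln (gpm N \<alpha> w))) z = of_real (8 / a))"
proof -
  note N = assms(1)
  define A where "A = (\<Sum>k\<le>N - 2. (gam N \<alpha> k)\<^sup>2 * real (Suc k * (N - Suc k)))"
  have Apos: "A > 0"
  proof -
    obtain k0 where k0: "k0 \<le> N - 2" "gam N \<alpha> k0 \<noteq> 0"
      using gam_nonzero[OF assms(2)] unfolding gam_def by auto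
    have p: "0 < Suc k0 * (N - Suc k0)" using k0 N by simp
    have "0 < (gam N \<alpha> k0)\<^sup>2 * real (Suc k0 * (N - Suc k0))"
      using k0 by (intro mult_pos_pos) (simp, simp only: of_nat_0_less_iff p)
    then show ?thesis unfolding A_def
      by (intro sum_pos2[of _ k0]) (use k0 in auto)
  qed
  have gpm_eq: "gpm N \<alpha> z = of_real (A / (1 + (cmod z)\<^sup>2)\<^sup>2)" for z
  proof -
    have "gpm N \<alpha> z = (\<Sum>k\<le>N - 2. of_real ((gam N \<alpha> k)\<^sup>2 * real (Suc k * (N - Suc k)) / (1 + (cmod z)\<^sup>2)\<^sup>2))"
      unfolding gpm_val[OF N] by (intro sum.cong refl) (simp add: aa_def rho_real power2_eq_square)
    also have "\<dots> = of_real (A / (1 + (cmod z)\<^sup>2)\<^sup>2)"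
      unfolding A_def sum_divide_distrib of_real_sum ..
    finally show ?thesis .
  qed
  have G: "gpm N \<alpha> = (\<lambda>w. of_real A / rho w ^ 2)"
    by (rule ext) (simp add: gpm_eq rho_real)
  have wH: "wd (\<lambda>w. of_real A / rho w ^ 2)"
    by (simp add: wd_rules wd_divide wd_rho rho_nz)
  have nr: "of_real A / rho w ^ 2 \<notin> \<real>\<^sub>\<le>\<^sub>0" for w
  proof -
    have e: "of_real A / rho w ^ 2 = of_real (A / (1 + (cmod w)\<^sup>2)\<^sup>2)" by (simp add: rho_real)
    have p: "A / (1 + (cmod w)\<^sup>2)\<^sup>2 > 0"
      by (intro divide_pos_pos Apos) (smt (verit) zero_le_power2 zero_less_power2)
    show ?thesis unfolding e nonpos_Reals_of_real_iff using p by simp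
  qed
  have A0: "(of_real A :: complex) \<noteq> 0" using Apos by simp
  have d1: "dzb (\<lambda>w. Ln (gpm N \<alpha> w)) = (\<lambda>w. - 2 * w / rho w)"
    unfolding G wd_Ln(3)[OF wH nr] using A0
    by (simp add: wd_rules wd_divide wd_rho rho_nz fun_eq_iff field_simps power2_eq_square eval_nat_numeral)
  have d2: "dz (\<lambda>w. - 2 * w / rho w) = (\<lambda>w. - 2 / rho w ^ 2)"
    by (simp add: wd_rules wd_divide wd_rho rho_nz fun_eq_iff) (simp add: rho_def algebra_simps)
  have K: "- 4 / gpm N \<alpha> z * dz (dzb (\<lambda>w. Ln (gpm N \<alpha> w))) z = of_real (8 / A)" for z
  proof -
    have "- 4 / gpm N \<alpha> z * dz (dzb (\<lambda>w. Ln (gpm N \<alpha> w))) z = - 4 / (of_real A / rho z ^ 2) * (- 2 / rho z ^ 2)"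
      unfolding d1 d2 by (simp add: G)
    also have "\<dots> = of_real (8 / A)" using A0 rho_nz[of z] by (simp add: field_simps)
    finally show ?thesis .
  qed
  show ?thesis using Apos gpp_zero[OF N] gpm_eq K by blast
qed

end
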